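(* Let $T>0$, $\mu,\nu\in\mathcal P(\mathcal X)$ and let $(c,v)\in\vec{\mathrm{CE}}_T(\mu,\nu)$ with $\int_0^T\vec{\mathcal A}(c(t),v(t))dt<\infty$. Then there exists a measurable $\psi:[0,T]\to\mathbb R^{\mathcal X}$ such that $(c,\psi)\in\mathrm{CE}_T(\mu,\nu)$ and $$\int_0^T\mathcal A(c(t),\psi(t))dt\le\int_0^T\vec{\mathcal A}(c(t),v(t))dt.$$
   Context: $\mathcal X=\{1,\dots,d\}$ finite, $\mathcal P(\mathcal X)\subset\mathbb R^{\mathcal X}$ probability measures on $\mathcal X$. $\{Q(\mu)\}_{\mu\in\mathcal P(\mathcal X)}$ is a family of rate matrices ($Q_{xy}(\mu)\ge0$ for $x\ne y$), each irreducible and reversible w.r.t. a Gibbs measure $\pi(\mu)$, with $\mu\mapsto Q_{xy}(\mu)$ Lipschitz. $\Lambda(s,t)=\int_0^1s^\alpha t^{1-\alpha}d\alpha$, $w_{xy}(\mu)=\Lambda(\mu_xQ_{xy}(\mu),\mu_yQ_{yx}(\mu))$. $\nabla_{xy}\psi=\psi_y-\psi_x$, $(\delta v)_x=\frac12\sum_y(v_{xy}-v_{yx})$. $(c,v)\in\vec{\mathrm{CE}}_T(\mu,\nu)$: $c:[0,T]\to\mathcal P(\mathcal X)$ continuous, $c(0)=\mu$, $c(T)=\nu$, $v:[0,T]\to\mathbb R^{\mathcal X\times\mathcal X}$ measurable and integrable, $\int_0^T[\dot\varphi c_x-\varphi(\delta v)_x]dt=0$ for all $\varphi\in C^1_c((0,T))$,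 $x\in\mathcal X$. $(c,\psi)\in\mathrm{CE}_T(\mu,\nu)$ if $(c,v)\in\vec{\mathrm{CE}}_T(\mu,\nu)$ with $v_{xy}(t)=w_{xy}(c(t))\nabla_{xy}\psi(t)$. $\alpha(v,w)=v^2/w$ if $w>0$, $0$ if $v=w=0$, $+\infty$ otherwise; $\vec{\mathcal A}(\mu,v)=\frac12\sum_{x,y}\alpha(v_{xy},w_{xy}(\mu))$; $\mathcal A(\mu,\psi)=\frac12\sum_{x,y}(\psi_y-\psi_x)^2w_{xy}(\mu)$. *)

theory Defs
  imports "HOL-Analysis.Analysis"
begin

text \<open>The finite state space X = {1..d} is modelled by a type variable of class finite.
  Measures on X and functions on X are functions 'x => real.\<close>

definition prob_meas :: "('x::finite \<Rightarrow> real) \<Rightarrow> bool" where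
  "prob_meas \<mu> \<longleftrightarrow> (\<forall>x. 0 \<le> \<mu> x) \<and> (\<Sum>x\<in>UNIV. \<mu> x) = 1"

definition logmean :: "real \<Rightarrow> real \<Rightarrow> real" where
  "logmean s t = integral {0..1} (\<lambda>a. s powr a * t powr (1 - a))"

text \<open>Edge weights w_xy(mu); only off-diagonal entries are meaningful (diagonal set to 0).\<close>
definition wgt :: "(('x::finite \<Rightarrow> real) \<Rightarrow> 'x \<Rightarrow> 'x \<Rightarrow> real) \<Rightarrow> ('x \<Rightarrow> real) \<Rightarrow> 'x \<Rightarrow> 'x \<Rightarrow> real" where
  "wgt Q \<mu> x y = (if x = y then 0 else logmean (\<mu> x * Q \<mu> x y) (\<mu> y * Q \<mu> y x))"

definition grad :: "('x \<Rightarrow> real) \<Rightarrow> 'x \<Rightarrow> 'x \<Rightarrow> real" where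
  "grad \<psi> x y = \<psi> y - \<psi> x"

definition dvg :: "('x::finite \<Rightarrow> 'x \<Rightarrow> real) \<Rightarrow> 'x \<Rightarrow> real" where
  "dvg v x = (1/2) * (\<Sum>y\<in>UNIV. v x y - v y x)"

definition alpha :: "real \<Rightarrow> real \<Rightarrow> ennreal" where
  "alpha v w = (if w > 0 then ennreal (v\<^sup>2 / w) else if v = 0 \<and> w = 0 then 0 else \<infinity>)"

definition vec_action :: "(('x::finite \<Rightarrow> real) \<Rightarrow> 'x \<Rightarrow> 'x \<Rightarrow> real) \<Rightarrow> ('x \<Rightarrow> real) \<Rightarrow> ('x \<Rightarrow> 'x \<Rightarrow> real) \<Rightarrow> ennreal" where
  "vec_action Q \<mu> v = ennreal (1/2) * (\<Sum>x\<in>UNIV. \<Sum>y\<in>UNIV. alpha (v x y) (wgt Q \<mu> x y))"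

definition action :: "(('x::finite \<Rightarrow> real) \<Rightarrow> 'x \<Rightarrow> 'x \<Rightarrow> real) \<Rightarrow> ('x \<Rightarrow> real) \<Rightarrow> ('x \<Rightarrow> real) \<Rightarrow> real" where
  "action Q \<mu> \<psi> = (1/2) * (\<Sum>x\<in>UNIV. \<Sum>y\<in>UNIV. (\<psi> y - \<psi> x)\<^sup>2 * wgt Q \<mu> x y)"

definition C1c :: "real \<Rightarrow> (real \<Rightarrow> real) \<Rightarrow> (real \<Rightarrow> real) \<Rightarrow> bool" where
  "C1c T \<phi> \<phi>' \<longleftrightarrow> (\<forall>t. (\<phi> has_real_derivative \<phi>' t) (at t)) \<and> continuous_on UNIV \<phi>' \<and>
     (\<exists>a b. 0 < a \<and> a \<le> b \<and> b < T \<and> (\<forall>t. t \<notin> {a..b} \<longrightarrow> \<phi> t = 0))"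

definition vecCE :: "real \<Rightarrow> ('x::finite \<Rightarrow> real) \<Rightarrow> ('x \<Rightarrow> real) \<Rightarrow> (real \<Rightarrow> 'x \<Rightarrow> real) \<Rightarrow> (real \<Rightarrow> 'x \<Rightarrow> 'x \<Rightarrow> real) \<Rightarrow> bool" where
  "vecCE T \<mu> \<nu> c v \<longleftrightarrow>
     (\<forall>x. continuous_on {0..T} (\<lambda>t. c t x)) \<and> (\<forall>t\<in>{0..T}. prob_meas (c t)) \<and>
     c 0 = \<mu> \<and> c T = \<nu> \<and>
     (\<forall>x y. set_integrable lborel {0..T} (\<lambda>t. v t x y)) \<and>
     (\<forall>\<phi> \<phi>' x. C1c T \<phi> \<phi>' \<longrightarrow>
        (LINT t:{0..T}|lborel. \<phi>' t * c t x - \<phi> t * dvg (v t) x) = 0)"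

definition CE :: "(('x::finite \<Rightarrow> real) \<Rightarrow> 'x \<Rightarrow> 'x \<Rightarrow> real) \<Rightarrow> real \<Rightarrow> ('x \<Rightarrow> real) \<Rightarrow> ('x \<Rightarrow> real) \<Rightarrow> (real \<Rightarrow> 'x \<Rightarrow> real) \<Rightarrow> (real \<Rightarrow> 'x \<Rightarrow> real) \<Rightarrow> bool" where
  "CE Q T \<mu> \<nu> c \<psi> \<longleftrightarrow> vecCE T \<mu> \<nu> c (\<lambda>t x y. wgt Q (c t) x y * grad (\<psi> t) x y)"

definition standing_assms :: "(('x::finite \<Rightarrow> real) \<Rightarrow> 'x \<Rightarrow> 'x \<Rightarrow> real) \<Rightarrow> (('x \<Rightarrow> real) \<Rightarrow> 'x \<Rightarrow> real) \<Rightarrow> bool" where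
  "standing_assms Q \<pi> \<longleftrightarrow>
     (\<forall>\<mu>. prob_meas \<mu> \<longrightarrow>
        (\<forall>x y. x \<noteq> y \<longrightarrow> 0 \<le> Q \<mu> x y) \<and>
        (\<forall>x y. (x, y) \<in> {(a, b). a \<noteq> b \<and> 0 < Q \<mu> a b}\<^sup>*) \<and>
        prob_meas (\<pi> \<mu>) \<and> (\<forall>x. 0 < \<pi> \<mu> x) \<and>
        (\<forall>x y. \<pi> \<mu> x * Q \<mu> x y = \<pi> \<mu> y * Q \<mu> y x)) \<and>
     (\<exists>L. \<forall>\<mu> \<mu>' x y. prob_meas \<mu> \<longrightarrow> prob_meas \<mu>' \<longrightarrow>
        \<bar>Q \<mu> x y - Q \<mu>' x y\<bar> \<le> L * (\<Sum>z\<in>UNIV. \<bar>\<mu> z - \<mu>' z\<bar>))"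

end

theory Submission
  imports Defs
begin


definition LM :: "real \<Rightarrow> real \<Rightarrow> real" where
  "LM s t = (if s = 0 \<or> t = 0 then 0 else if ln s = ln t then exp (ln t)
     else (exp (ln s) - exp (ln t)) / (ln s - ln t))"

lemma exp_lin_integral:
  fixes q k :: real
  shows "integral {0..1} (\<lambda>a. exp (q + a * k)) = (if k = 0 then exp q else (exp (q + k) - exp q) / k)"
proof (cases "k = 0")
  case True then show ?thesis by simp
next
  case False
  have "((\<lambda>a. exp (q + a * k)) has_integral (exp (q + 1 * k) / k - exp (q + 0 * k) / k)) {0..1}"
  proof (rule fundamental_theorem_of_calculus)
    show "(0::real) \<le> 1" by simp
    fix x :: real
    show "((\<lambda>a. exp (q + a * k) / k) has_vector_derivative exp (q + x * k)) (at x within {0..1})"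
      using False
      by (auto intro!: derivative_eq_intros simp: has_real_derivative_iff_has_vector_derivative[symmetric])
  qed
  then show ?thesis using False by (simp add: integral_unique diff_divide_distrib)
qed

lemma logmean_LM: "logmean s t = LM s t"
proof (cases "s = 0 \<or> t = 0")
  case True then show ?thesis by (auto simp: logmean_def LM_def)
next
  case False
  then have "\<And>a. s powr a * t powr (1 - a) = exp (ln t + a * (ln s - ln t))"
    by (simp add: powr_def exp_add[symmetric] algebra_simps)
  then have "logmean s t = integral {0..1} (\<lambda>a. exp (ln t + a * (ln s - ln t)))"
    by (simp add: logmean_def)
  also have "\<dots> = LM s t" using False by (simp add: exp_lin_integral LM_def)
  finally show ?thesis .
qed

lemma LM_measurable[measurable]:
  assumes [measurable]: "f \<in> borel_measurable M" "g \<in> borel_measurable M"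
  shows "(\<lambda>x. logmean (f x) (g x)) \<in> borel_measurable M"
  unfolding logmean_LM LM_def by measurable

lemma LM_sym: "logmean s t = logmean t s"
  unfolding logmean_LM LM_def by (auto simp: field_simps)

lemma LM_pos: assumes "s > 0" "t > 0" shows "logmean s t > 0"
proof -
  have "(exp (ln s) - exp (ln t)) / (ln s - ln t) > 0" if "ln s \<noteq> ln t"
  proof (cases "ln s < ln t")
    case True
    then have "exp (ln s) - exp (ln t) < 0" "ln s - ln t < 0" by auto
    then show ?thesis by (simp add: divide_neg_neg)
  next
    case False
    then have "exp (ln s) - exp (ln t) > 0" "ln s - ln t > 0" using that by auto
    then show ?thesis by simp
  qed
  then show ?thesis using assms unfolding logmean_LM LM_def by auto
qed

lemma LM_zero: "s = 0 \<or> t = 0 \<Longrightarrow> logmean s t = 0"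
  unfolding logmean_LM LM_def by auto

lemma LM_le_aux:
  fixes p q :: real assumes "q < p"
  shows "(exp p - exp q) / (p - q) \<le> exp p"
proof -
  have "1 + (q - p) \<le> exp (q - p)" by (rule exp_ge_add_one_self)
  then have "exp p * (1 + (q - p)) \<le> exp p * exp (q - p)" by simp
  also have "\<dots> = exp q" by (simp add: exp_diff)
  finally have "exp p - exp q \<le> (p - q) * exp p" by (simp add: algebra_simps)
  then show ?thesis using assms by (simp add: divide_le_eq mult.commute)
qed

lemma LM_le: assumes "s \<ge> 0" "t \<ge> 0" shows "logmean s t \<le> s + t"
proof (cases "s = 0 \<or> t = 0")
  case True then show ?thesis using assms LM_zero by auto
next
  case False
  then have s: "s > 0" and t: "t > 0" using assms by auto
  show ?thesis
  proof (cases "ln s = ln t")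
    case True then show ?thesis using s t by (simp add: logmean_LM LM_def)
  next
    case ne: False
    show ?thesis
    proof (cases "ln t < ln s")
      case True
      have "(exp (ln s) - exp (ln t)) / (ln s - ln t) \<le> exp (ln s)" by (rule LM_le_aux[OF True])
      then show ?thesis using s t ne by (simp add: logmean_LM LM_def)
    next
      case False
      then have lt: "ln s < ln t" using ne by auto
      have "(exp (ln t) - exp (ln s)) / (ln t - ln s) \<le> exp (ln t)" by (rule LM_le_aux[OF lt])
      moreover have "(exp (ln s) - exp (ln t)) / (ln s - ln t) = (exp (ln t) - exp (ln s)) / (ln t - ln s)"
        by (metis minus_diff_eq minus_divide_divide)
      ultimately show ?thesis using s t ne by (simp add: logmean_LM LM_def)
    qed
  qed
qed

lemma LM_nonneg: assumes "s \<ge> 0" "t \<ge> 0" shows "logmean s t \<ge> 0"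
  using assms LM_pos LM_zero by (cases "s = 0 \<or> t = 0") (auto intro: less_imp_le)



definition edges :: "('x \<Rightarrow> 'x \<Rightarrow> real) \<Rightarrow> ('x \<times> 'x) set" where
  "edges w = {(x,y). 0 < w x y}"
definition repE :: "('x \<times> 'x) set \<Rightarrow> 'x \<Rightarrow> 'x" where
  "repE E x = (SOME y. (x,y) \<in> E\<^sup>*)"
definition isroot :: "('x \<Rightarrow> 'x \<Rightarrow> real) \<Rightarrow> 'x \<Rightarrow> bool" where
  "isroot w x \<longleftrightarrow> repE (edges w) x = x"
definition Lap :: "('x::finite \<Rightarrow> 'x \<Rightarrow> real) \<Rightarrow> ('x \<Rightarrow> real) \<Rightarrow> 'x \<Rightarrow> real" where
  "Lap w \<psi> x = (\<Sum>y\<in>UNIV. w x y * (\<psi> x - \<psi> y))"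
definition Amat :: "('x::finite \<Rightarrow> 'x \<Rightarrow> real) \<Rightarrow> real^'x^'x" where
  "Amat w = (\<chi> i j. if isroot w i then (if i = j then 1 else 0)
       else (if i = j then (\<Sum>z\<in>UNIV. w i z) else 0) - w i j)"
definition rhs :: "('x::finite \<Rightarrow> 'x \<Rightarrow> real) \<Rightarrow> ('x \<Rightarrow> real) \<Rightarrow> real^'x" where
  "rhs w b = (\<chi> i. if isroot w i then 0 else - b i)"
definition Sol :: "('x::finite \<Rightarrow> 'x \<Rightarrow> real) \<Rightarrow> ('x \<Rightarrow> real) \<Rightarrow> 'x \<Rightarrow> real" where
  "Sol w b k = det (\<chi> i j. if j = k then rhs w b $ i else Amat w $ i $ j) / det (Amat w)"

definition symw :: "('x \<Rightarrow> 'x \<Rightarrow> real) \<Rightarrow> bool" where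
  "symw w \<longleftrightarrow> (\<forall>x y. w x y = w y x) \<and> (\<forall>x y. 0 \<le> w x y)"

lemma symw_sym: "symw w \<Longrightarrow> w x y = w y x" by (simp add: symw_def)
lemma symw_nn: "symw w \<Longrightarrow> 0 \<le> w x y" by (simp add: symw_def)

lemma Amat_mult:
  "(Amat w *v (\<chi> i. \<psi> i)) $ i = (if isroot w i then \<psi> i else Lap w \<psi> i)"
proof -
  have "(Amat w *v (\<chi> i. \<psi> i)) $ i = (\<Sum>j\<in>UNIV. Amat w $ i $ j * \<psi> j)"
    by (simp add: matrix_vector_mult_def)
  also have "\<dots> = (if isroot w i then \<psi> i else Lap w \<psi> i)"
  proof (cases "isroot w i")
    case True
    then have "\<And>j. Amat w $ i $ j = (if i = j then 1 else 0)" by (simp add: Amat_def)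
    then have "(\<Sum>j\<in>UNIV. Amat w $ i $ j * \<psi> j) = (\<Sum>j\<in>UNIV. if i = j then \<psi> j else 0)"
      by (intro sum.cong refl) simp
    then show ?thesis using True by simp
  next
    case False
    have "(\<Sum>j\<in>UNIV. Amat w $ i $ j * \<psi> j)
       = (\<Sum>j\<in>UNIV. (if i = j then (\<Sum>z\<in>UNIV. w i z) * \<psi> j else 0)) - (\<Sum>j\<in>UNIV. w i j * \<psi> j)"
    proof -
      have e: "\<And>j. Amat w $ i $ j = (if i = j then (\<Sum>z\<in>UNIV. w i z) else 0) - w i j"
        using False by (simp add: Amat_def)
      have "(\<Sum>j\<in>UNIV. Amat w $ i $ j * \<psi> j) = (\<Sum>j\<in>UNIV. (if i = j then (\<Sum>z\<in>UNIV. w i z) * \<psi> j else 0) - w i j * \<psi> j)"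
        by (intro sum.cong refl) (simp only: e, simp add: algebra_simps)
      then show ?thesis by (simp add: sum_subtractf)
    qed
    also have "\<dots> = Lap w \<psi> i"
      by (simp add: Lap_def algebra_simps sum_subtractf sum_distrib_left)
    finally show ?thesis using False by simp
  qed
  finally show ?thesis .
qed

lemma sum_swap_anti:
  fixes f :: "'x \<Rightarrow> 'x \<Rightarrow> real"
  assumes "finite C" "\<And>x y. f x y = - f y x"
  shows "(\<Sum>x\<in>C. \<Sum>y\<in>C. f x y) = 0"
proof -
  have "(\<Sum>x\<in>C. \<Sum>y\<in>C. f x y) = (\<Sum>y\<in>C. \<Sum>x\<in>C. f x y)" by (rule sum.swap)
  also have "\<dots> = (\<Sum>y\<in>C. \<Sum>x\<in>C. - f y x)" by (intro sum.cong refl) (rule assms(2))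
  also have "\<dots> = - (\<Sum>y\<in>C. \<Sum>x\<in>C. f y x)" by (simp add: sum_negf)
  finally show ?thesis by simp
qed

lemma Lap_energy:
  fixes \<psi> :: "'x::finite \<Rightarrow> real"
  assumes "symw w"
  shows "(\<Sum>x\<in>UNIV. \<psi> x * Lap w \<psi> x) = (1/2) * (\<Sum>x\<in>UNIV. \<Sum>y\<in>UNIV. w x y * (\<psi> x - \<psi> y)\<^sup>2)"
proof -
  have a: "(\<Sum>x\<in>UNIV. \<Sum>y\<in>UNIV. w x y * (\<psi> x - \<psi> y)\<^sup>2)
     = (\<Sum>x\<in>UNIV. \<Sum>y\<in>UNIV. w x y * \<psi> x * (\<psi> x - \<psi> y)) - (\<Sum>x\<in>UNIV. \<Sum>y\<in>UNIV. w x y * \<psi> y * (\<psi> x - \<psi> y))"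
    by (simp add: sum_subtractf[symmetric] power2_eq_square algebra_simps)
  have b: "(\<Sum>x\<in>UNIV. \<Sum>y\<in>UNIV. w x y * \<psi> y * (\<psi> x - \<psi> y)) = - (\<Sum>x\<in>UNIV. \<Sum>y\<in>UNIV. w x y * \<psi> x * (\<psi> x - \<psi> y))"
  proof -
    have "(\<Sum>x\<in>UNIV. \<Sum>y\<in>UNIV. w x y * \<psi> y * (\<psi> x - \<psi> y)) = (\<Sum>y\<in>UNIV. \<Sum>x\<in>UNIV. w x y * \<psi> y * (\<psi> x - \<psi> y))"
      by (rule sum.swap)
    also have "\<dots> = (\<Sum>y\<in>UNIV. \<Sum>x\<in>UNIV. - (w y x * \<psi> y * (\<psi> y - \<psi> x)))"
      by (intro sum.cong refl) (metis symw_sym[OF assms] minus_diff_eq mult_minus_right)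
    also have "\<dots> = - (\<Sum>y\<in>UNIV. \<Sum>x\<in>UNIV. w y x * \<psi> y * (\<psi> y - \<psi> x))"
      by (simp add: sum_negf)
    finally show ?thesis .
  qed
  have "(\<Sum>x\<in>UNIV. \<Sum>y\<in>UNIV. w x y * (\<psi> x - \<psi> y)\<^sup>2) = 2 * (\<Sum>x\<in>UNIV. \<Sum>y\<in>UNIV. w x y * \<psi> x * (\<psi> x - \<psi> y))"
    using a b by simp
  moreover have "(\<Sum>x\<in>UNIV. \<psi> x * Lap w \<psi> x) = (\<Sum>x\<in>UNIV. \<Sum>y\<in>UNIV. w x y * \<psi> x * (\<psi> x - \<psi> y))"
    by (simp add: Lap_def sum_distrib_left algebra_simps)
  ultimately show ?thesis by simp
qed

lemma edges_sym: "symw w \<Longrightarrow> sym (edges w)"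
  unfolding edges_def sym_def by (metis (mono_tags) case_prodD case_prodI mem_Collect_eq symw_sym)

lemma rtr_sym: "symw w \<Longrightarrow> (x,y) \<in> (edges w)\<^sup>* \<Longrightarrow> (y,x) \<in> (edges w)\<^sup>*"
  using edges_sym sym_rtrancl by (metis symD)

lemma class_eq: assumes "symw w" "(x,y) \<in> (edges w)\<^sup>*"
  shows "(\<lambda>z. (x,z) \<in> (edges w)\<^sup>*) = (\<lambda>z. (y,z) \<in> (edges w)\<^sup>*)"
  using assms rtr_sym[OF assms(1)] by (auto intro: rtrancl_trans)

lemma rep_in: "(x, repE E x) \<in> E\<^sup>*"
  unfolding repE_def by (rule someI[of _ x]) simp

lemma rep_eq: assumes "symw w" "(x,y) \<in> (edges w)\<^sup>*"
  shows "repE (edges w) x = repE (edges w) y"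
  unfolding repE_def using class_eq[OF assms] by simp

lemma isroot_rep: "symw w \<Longrightarrow> isroot w (repE (edges w) x)"
  unfolding isroot_def using rep_eq[OF _ rep_in] by metis

lemma edge_const:
  assumes "(x,y) \<in> (edges w)\<^sup>*" "\<And>x y. 0 < w x y \<Longrightarrow> \<psi> x = \<psi> y"
  shows "\<psi> x = \<psi> y"
  using assms(1) by induction (auto simp: edges_def dest: assms(2))

lemma Amat_inj:
  assumes "symw w" "Amat w *v u = 0"
  shows "u = 0"
proof -
  define \<psi> where "\<psi> i = u $ i" for i
  have u: "u = (\<chi> i. \<psi> i)" by (simp add: \<psi>_def vec_eq_iff)
  have eq: "(if isroot w i then \<psi> i else Lap w \<psi> i) = 0" for i
    using assms(2) Amat_mult[of w \<psi> i] u by simp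
  have "(\<Sum>x\<in>UNIV. \<psi> x * Lap w \<psi> x) = 0"
    by (rule sum.neutral) (metis eq mult_zero_left mult_zero_right)
  then have s0: "(\<Sum>x\<in>UNIV. \<Sum>y\<in>UNIV. w x y * (\<psi> x - \<psi> y)\<^sup>2) = 0"
    using Lap_energy[OF assms(1)] by simp
  have nn: "0 \<le> w x y * (\<psi> x - \<psi> y)\<^sup>2" for x y using symw_nn[OF assms(1)] by simp
  have "(\<Sum>y\<in>UNIV. w x y * (\<psi> x - \<psi> y)\<^sup>2) = 0" for x
    using s0 by (subst (asm) sum_nonneg_eq_0_iff) (auto intro: sum_nonneg nn)
  then have "w x y * (\<psi> x - \<psi> y)\<^sup>2 = 0" for x y
    by (subst (asm) sum_nonneg_eq_0_iff) (auto intro: nn)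
  then have c: "0 < w x y \<Longrightarrow> \<psi> x = \<psi> y" for x y by (metis mult_eq_0_iff less_irrefl power_eq_0_iff right_minus_eq)
  have "\<psi> x = 0" for x
  proof -
    have "\<psi> x = \<psi> (repE (edges w) x)" by (rule edge_const[OF rep_in c])
    also have "\<dots> = 0" using eq[of "repE (edges w) x"] isroot_rep[OF assms(1)] by simp
    finally show ?thesis .
  qed
  then show ?thesis using u by (simp add: vec_eq_iff)
qed

lemma det_Amat: "symw w \<Longrightarrow> det (Amat w) \<noteq> 0"
  using Amat_inj matrix_left_invertible_ker invertible_left_inverse invertible_det_nz by metis

lemma Sol_eq:
  assumes "symw w"
  shows "Amat w *v (\<chi> k. Sol w b k) = rhs w b"
  using cramer[OF det_Amat[OF assms], of "\<chi> k. Sol w b k" "rhs w b"]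
  by (simp add: Sol_def)

lemma Sol_nonroot: "symw w \<Longrightarrow> \<not> isroot w i \<Longrightarrow> Lap w (Sol w b) i = - b i"
  using Sol_eq[of w b] Amat_mult[of w "Sol w b" i] by (simp add: rhs_def vec_eq_iff)

lemma Sol_Lap:
  assumes w: "symw w" and hb: "\<And>x. (\<Sum>y\<in>{y. (x,y) \<in> (edges w)\<^sup>*}. b y) = 0"
  shows "Lap w (Sol w b) i = - b i"
proof (cases "isroot w i")
  case False then show ?thesis using Sol_nonroot[OF w] by simp
next
  case True
  define C where "C = {y. (i,y) \<in> (edges w)\<^sup>*}"
  define \<psi> where "\<psi> = Sol w b"
  have iC: "i \<in> C" by (simp add: C_def)
  have clos: "y \<in> C \<Longrightarrow> 0 < w y z \<Longrightarrow> z \<in> C" for y z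
    using rtrancl_into_rtrancl[of i y "edges w" z] by (simp add: C_def edges_def)
  have "(\<Sum>y\<in>C. Lap w \<psi> y) = (\<Sum>y\<in>C. \<Sum>z\<in>UNIV. w y z * (\<psi> y - \<psi> z))" by (simp add: Lap_def)
  also have "\<dots> = (\<Sum>y\<in>C. \<Sum>z\<in>C. w y z * (\<psi> y - \<psi> z))"
  proof (rule sum.cong[OF refl])
    fix y assume y: "y \<in> C"
    show "(\<Sum>z\<in>UNIV. w y z * (\<psi> y - \<psi> z)) = (\<Sum>z\<in>C. w y z * (\<psi> y - \<psi> z))"
    proof (rule sum.mono_neutral_right)
      show "\<forall>z\<in>UNIV - C. w y z * (\<psi> y - \<psi> z) = 0"
      proof
        fix z assume "z \<in> UNIV - C"
        then have "\<not> 0 < w y z" using clos y by auto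
        then have "w y z = 0" using symw_nn[OF w, of y z] by simp
        then show "w y z * (\<psi> y - \<psi> z) = 0" by simp
      qed
    qed auto
  qed
  also have "\<dots> = 0"
  proof (rule sum_swap_anti)
    fix x y show "w x y * (\<psi> x - \<psi> y) = - (w y x * (\<psi> y - \<psi> x))"
      using symw_sym[OF w, of x y] by (simp add: algebra_simps)
  qed simp
  finally have s1: "(\<Sum>y\<in>C. Lap w \<psi> y) = 0" .
  have s2: "(\<Sum>y\<in>C. b y) = 0" using hb[of i] by (simp add: C_def)
  have "(\<Sum>y\<in>C. Lap w \<psi> y + b y) = 0" using s1 s2 by (simp add: sum.distrib)
  moreover have "(\<Sum>y\<in>C. Lap w \<psi> y + b y) = Lap w \<psi> i + b i"
  proof -
    have "(\<Sum>y\<in>C. Lap w \<psi> y + b y) = (Lap w \<psi> i + b i) + (\<Sum>y\<in>C - {i}. Lap w \<psi> y + b y)"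
      using iC by (simp add: sum.remove)
    moreover have "(\<Sum>y\<in>C - {i}. Lap w \<psi> y + b y) = 0"
    proof (rule sum.neutral, rule ballI)
      fix y assume y: "y \<in> C - {i}"
      have "repE (edges w) y = repE (edges w) i" using y rep_eq[OF w, of i y] by (simp add: C_def)
      also have "\<dots> = i" using True by (simp add: isroot_def)
      finally have "\<not> isroot w y" using y by (auto simp: isroot_def)
      then show "Lap w \<psi> y + b y = 0" using Sol_nonroot[OF w] by (simp add: \<psi>_def)
    qed
    ultimately show ?thesis by simp
  qed
  ultimately show ?thesis by (simp add: \<psi>_def)
qed



lemma det_measurable[measurable]:
  fixes F :: "'a \<Rightarrow> 'n::finite \<Rightarrow> 'n \<Rightarrow> real"
  assumes [measurable]: "\<And>i j. (\<lambda>t. F t i j) \<in> borel_measurable M"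
  shows "(\<lambda>t. det (\<chi> i j. F t i j)) \<in> borel_measurable M"
  unfolding det_def by simp measurable

lemma edges_meas:
  fixes W :: "'a \<Rightarrow> 'x::finite \<Rightarrow> 'x \<Rightarrow> real"
  assumes [measurable]: "\<And>x y. (\<lambda>t. W t x y) \<in> borel_measurable M"
  shows "(\<lambda>t. edges (W t)) \<in> measurable M (count_space UNIV)"
proof (rule iffD2[OF measurable_count_space_eq2_countable], intro conjI ballI)
  show "(\<lambda>t. edges (W t)) \<in> space M \<rightarrow> UNIV" by simp
  fix E :: "('x \<times> 'x) set"
  have "(\<lambda>t. edges (W t)) -` {E} \<inter> space M = {t \<in> space M. \<forall>x y. (0 < W t x y) = ((x,y) \<in> E)}"
    by (auto simp: edges_def)
  also have "\<dots> \<in> sets M" by measurable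
  finally show "(\<lambda>t. edges (W t)) -` {E} \<inter> space M \<in> sets M" .
qed

lemma isroot_meas[measurable]:
  fixes W :: "'a \<Rightarrow> 'x::finite \<Rightarrow> 'x \<Rightarrow> real"
  assumes [measurable]: "\<And>x y. (\<lambda>t. W t x y) \<in> borel_measurable M"
  shows "Measurable.pred M (\<lambda>t. isroot (W t) x)"
proof -
  have "(\<lambda>t. edges (W t)) -` {E. repE E x = x} \<inter> space M \<in> sets M"
    by (rule measurable_sets[OF edges_meas[OF assms]]) simp
  moreover have "(\<lambda>t. edges (W t)) -` {E. repE E x = x} \<inter> space M = {t \<in> space M. isroot (W t) x}"
    by (auto simp: isroot_def)
  ultimately show ?thesis unfolding Measurable.pred_def by simp
qed

lemma Sol_meas[measurable]:
  fixes W :: "'a \<Rightarrow> 'x::finite \<Rightarrow> 'x \<Rightarrow> real"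
  assumes [measurable]: "\<And>x y. (\<lambda>t. W t x y) \<in> borel_measurable M"
    and [measurable]: "\<And>x. (\<lambda>t. B t x) \<in> borel_measurable M"
  shows "(\<lambda>t. Sol (W t) (B t) k) \<in> borel_measurable M"
  unfolding Sol_def
proof (rule borel_measurable_divide)
  have [measurable]: "(\<lambda>t. Amat (W t) $ i $ j) \<in> borel_measurable M" for i j
    unfolding Amat_def vec_lambda_beta by measurable
  have [measurable]: "(\<lambda>t. rhs (W t) (B t) $ i) \<in> borel_measurable M" for i
    unfolding rhs_def vec_lambda_beta by measurable
  have e: "Amat (W t) = (\<chi> i j. Amat (W t) $ i $ j)" for t by (simp add: vec_eq_iff)
  show "(\<lambda>t. det (Amat (W t))) \<in> borel_measurable M"
    by (subst e) measurable
  show "(\<lambda>t. det (\<chi> i j. if j = k then rhs (W t) (B t) $ i else Amat (W t) $ i $ j)) \<in> borel_measurable M"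
    by measurable
qed



lemma sum_grad_dvg:
  fixes u :: "'x::finite \<Rightarrow> 'x \<Rightarrow> real"
  shows "(\<Sum>x\<in>UNIV. \<Sum>y\<in>UNIV. u x y * (\<psi> y - \<psi> x)) = - 2 * (\<Sum>x\<in>UNIV. \<psi> x * dvg u x)"
proof -
  have d: "\<psi> x * dvg u x = (1/2) * ((\<Sum>y\<in>UNIV. \<psi> x * u x y) - (\<Sum>y\<in>UNIV. \<psi> x * u y x))" for x
  proof -
    have e: "dvg u x = (1/2) * ((\<Sum>y\<in>UNIV. u x y) - (\<Sum>y\<in>UNIV. u y x))"
      by (simp only: dvg_def sum_subtractf)
    show ?thesis unfolding e sum_distrib_left[symmetric] by (simp add: algebra_simps)
  qed
  have "(\<Sum>x\<in>UNIV. \<psi> x * dvg u x) = (1/2) * ((\<Sum>x\<in>UNIV. \<Sum>y\<in>UNIV. \<psi> x * u x y) - (\<Sum>x\<in>UNIV. \<Sum>y\<in>UNIV. \<psi> x * u y x))"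
    by (simp only: d sum_distrib_left[symmetric] sum_subtractf)
  also have "(\<Sum>x\<in>UNIV. \<Sum>y\<in>UNIV. \<psi> x * u y x) = (\<Sum>x\<in>UNIV. \<Sum>y\<in>UNIV. \<psi> y * u x y)"
    by (rule sum.swap)
  finally show ?thesis by (simp add: sum_subtractf algebra_simps)
qed

lemma dvg_flux:
  assumes "symw w"
  shows "dvg (\<lambda>x y. w x y * grad \<psi> x y) x = - Lap w \<psi> x"
proof -
  have "dvg (\<lambda>x y. w x y * grad \<psi> x y) x = (1/2) * (\<Sum>y\<in>UNIV. 2 * (w x y * (\<psi> y - \<psi> x)))"
    unfolding dvg_def grad_def
  proof (intro arg_cong[where f="\<lambda>s. (1/2) * s"] sum.cong refl)
    fix y show "w x y * (\<psi> y - \<psi> x) - w y x * (\<psi> x - \<psi> y) = 2 * (w x y * (\<psi> y - \<psi> x))"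
      using symw_sym[OF assms, of y x] by (simp add: algebra_simps)
  qed
  also have "\<dots> = (\<Sum>y\<in>UNIV. w x y * (\<psi> y - \<psi> x))" by (simp add: sum_distrib_left[symmetric])
  also have "\<dots> = - Lap w \<psi> x" by (simp add: Lap_def sum_negf[symmetric] algebra_simps)
  finally show ?thesis .
qed

lemma comp_sum:
  assumes w: "symw w" and hu: "\<And>x y. w x y = 0 \<Longrightarrow> u x y = 0"
  shows "(\<Sum>y\<in>{y. (i,y) \<in> (edges w)\<^sup>*}. dvg u y) = 0"
proof -
  define C where "C = {y. (i,y) \<in> (edges w)\<^sup>*}"
  have clos: "y \<in> C \<Longrightarrow> 0 < w y z \<Longrightarrow> z \<in> C" for y z
    using rtrancl_into_rtrancl[of i y "edges w" z] by (simp add: C_def edges_def)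
  have "(\<Sum>y\<in>C. \<Sum>z\<in>UNIV. u y z - u z y) = (\<Sum>y\<in>C. \<Sum>z\<in>C. u y z - u z y)"
  proof (rule sum.cong[OF refl])
    fix y assume y: "y \<in> C"
    show "(\<Sum>z\<in>UNIV. u y z - u z y) = (\<Sum>z\<in>C. u y z - u z y)"
    proof (rule sum.mono_neutral_right)
      show "\<forall>z\<in>UNIV - C. u y z - u z y = 0"
      proof
        fix z assume "z \<in> UNIV - C"
        then have "\<not> 0 < w y z" using clos y by auto
        then have "w y z = 0" using symw_nn[OF w, of y z] by simp
        moreover then have "w z y = 0" using symw_sym[OF w, of y z] by simp
        ultimately show "u y z - u z y = 0" using hu by simp
      qed
    qed auto
  qed
  also have "\<dots> = 0" by (rule sum_swap_anti) auto
  finally show ?thesis unfolding C_def[symmetric] dvg_def by (simp add: sum_divide_distrib[symmetric])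
qed

lemma alpha_fin:
  assumes "0 \<le> w" "alpha v w < \<infinity>"
  shows "(w = 0 \<longrightarrow> v = 0) \<and> alpha v w = ennreal (if w > 0 then v\<^sup>2 / w else 0)"
  using assms by (auto simp: alpha_def)

lemma va_fin:
  fixes w v :: "'x::finite \<Rightarrow> 'x \<Rightarrow> real"
  assumes nn: "\<And>x y. 0 \<le> w x y"
    and fin: "ennreal (1/2) * (\<Sum>x\<in>UNIV. \<Sum>y\<in>UNIV. alpha (v x y) (w x y)) < \<infinity>"
  shows "\<forall>x y. w x y = 0 \<longrightarrow> v x y = 0"
    and "ennreal (1/2) * (\<Sum>x\<in>UNIV. \<Sum>y\<in>UNIV. alpha (v x y) (w x y))
         = ennreal ((1/2) * (\<Sum>x\<in>UNIV. \<Sum>y\<in>UNIV. (if w x y > 0 then (v x y)\<^sup>2 / w x y else 0)))"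
proof -
  have "(\<Sum>x\<in>UNIV. \<Sum>y\<in>UNIV. alpha (v x y) (w x y)) < \<infinity>"
    using fin by (auto simp: ennreal_mult_less_top)
  then have each: "alpha (v x y) (w x y) < \<infinity>" for x y
    by (simp add: top.not_eq_extremum[symmetric])
  have A: "w x y = 0 \<longrightarrow> v x y = 0" and B: "alpha (v x y) (w x y) = ennreal (if w x y > 0 then (v x y)\<^sup>2 / w x y else 0)" for x y
    using alpha_fin[OF nn each] by auto
  show "\<forall>x y. w x y = 0 \<longrightarrow> v x y = 0" using A by blast
  have nn2: "0 \<le> (if w x y > 0 then (v x y)\<^sup>2 / w x y else 0)" for x y by auto
  show "ennreal (1/2) * (\<Sum>x\<in>UNIV. \<Sum>y\<in>UNIV. alpha (v x y) (w x y))
         = ennreal ((1/2) * (\<Sum>x\<in>UNIV. \<Sum>y\<in>UNIV. (if w x y > 0 then (v x y)\<^sup>2 / w x y else 0)))"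
    by (simp add: B nn2 sum_nonneg ennreal_mult[symmetric] del: ennreal_half)
qed

lemma action_le:
  fixes w v :: "'x::finite \<Rightarrow> 'x \<Rightarrow> real"
  assumes w: "symw w" and hv: "\<And>x y. w x y = 0 \<Longrightarrow> v x y = 0"
    and hl: "\<And>x. Lap w \<psi> x = - dvg v x"
  shows "(1/2) * (\<Sum>x\<in>UNIV. \<Sum>y\<in>UNIV. (\<psi> y - \<psi> x)\<^sup>2 * w x y)
     \<le> (1/2) * (\<Sum>x\<in>UNIV. \<Sum>y\<in>UNIV. (if w x y > 0 then (v x y)\<^sup>2 / w x y else 0))"
proof -
  define Sw where "Sw = (\<Sum>x\<in>UNIV. \<Sum>y\<in>UNIV. (\<psi> y - \<psi> x)\<^sup>2 * w x y)"
  define Sa where "Sa = (\<Sum>x\<in>UNIV. \<Sum>y\<in>UNIV. (if w x y > 0 then (v x y)\<^sup>2 / w x y else 0))"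
  have "(\<Sum>x\<in>UNIV. \<psi> x * Lap w \<psi> x) = (1/2) * Sw"
    unfolding Lap_energy[OF w] Sw_def
    by (intro arg_cong[where f="\<lambda>s. (1/2) * s"] sum.cong refl) (simp add: power2_commute)
  moreover have "(\<Sum>x\<in>UNIV. \<psi> x * Lap w \<psi> x) = - (\<Sum>x\<in>UNIV. \<psi> x * dvg v x)"
    by (simp add: hl sum_negf)
  ultimately have e1: "Sw = (\<Sum>x\<in>UNIV. \<Sum>y\<in>UNIV. v x y * (\<psi> y - \<psi> x))"
    unfolding sum_grad_dvg by simp
  have pt: "v x y * (\<psi> y - \<psi> x) \<le> (1/2) * (if w x y > 0 then (v x y)\<^sup>2 / w x y else 0) + (1/2) * ((\<psi> y - \<psi> x)\<^sup>2 * w x y)" for x y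
  proof (cases "w x y > 0")
    case True
    define g where "g = \<psi> y - \<psi> x"
    have "0 \<le> (v x y - w x y * g)\<^sup>2 / w x y" using True by simp
    also have "(v x y - w x y * g)\<^sup>2 / w x y = (v x y)\<^sup>2 / w x y - 2 * v x y * g + g\<^sup>2 * w x y"
      using True by (simp add: field_simps power2_eq_square)
    finally show ?thesis using True by (simp add: g_def)
  next
    case False
    then have "w x y = 0" using symw_nn[OF w, of x y] by simp
    then show ?thesis using hv by simp
  qed
  have "Sw \<le> (\<Sum>x\<in>UNIV. \<Sum>y\<in>UNIV. (1/2) * (if w x y > 0 then (v x y)\<^sup>2 / w x y else 0) + (1/2) * ((\<psi> y - \<psi> x)\<^sup>2 * w x y))"
    unfolding e1 by (intro sum_mono pt)
  also have "\<dots> = (1/2) * Sa + (1/2) * Sw"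
    by (simp add: Sa_def Sw_def sum.distrib sum_distrib_left)
  finally show ?thesis by (simp add: Sa_def[symmetric] Sw_def[symmetric])
qed

lemma alpha_meas[measurable]:
  assumes [measurable]: "f \<in> borel_measurable M" "g \<in> borel_measurable M"
  shows "(\<lambda>t. alpha (f t) (g t)) \<in> borel_measurable M"
  unfolding alpha_def by measurable



lemma prob_le1: "prob_meas \<mu> \<Longrightarrow> 0 \<le> \<mu> x \<and> \<mu> x \<le> 1"
proof -
  assume h: "prob_meas \<mu>"
  then have "\<mu> x \<le> (\<Sum>z\<in>UNIV. \<mu> z)" unfolding prob_meas_def by (intro member_le_sum) auto
  then show ?thesis using h unfolding prob_meas_def by auto
qed

lemma Q_cont:
  fixes Q :: "('x::finite \<Rightarrow> real) \<Rightarrow> 'x \<Rightarrow> 'x \<Rightarrow> real" and f :: "real \<Rightarrow> 'x \<Rightarrow> real"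
  assumes L: "\<forall>\<mu> \<mu>' x y. prob_meas \<mu> \<longrightarrow> prob_meas \<mu>' \<longrightarrow>
        \<bar>Q \<mu> x y - Q \<mu>' x y\<bar> \<le> L * (\<Sum>z\<in>UNIV. \<bar>\<mu> z - \<mu>' z\<bar>)"
    and pm: "\<And>t. prob_meas (f t)" and cf: "\<And>z. continuous_on UNIV (\<lambda>t. f t z)"
  shows "continuous_on UNIV (\<lambda>t. Q (f t) x y)"
  unfolding continuous_on_def
proof (intro ballI)
  fix t0 :: real
  have fz: "((\<lambda>t. f t z) \<longlongrightarrow> f t0 z) (at t0)" for z
    using cf[of z] unfolding continuous_on_def by auto
  have "((\<lambda>t. L * (\<Sum>z\<in>UNIV. \<bar>f t z - f t0 z\<bar>)) \<longlongrightarrow> L * (\<Sum>z\<in>UNIV. \<bar>f t0 z - f t0 z\<bar>)) (at t0)"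
    by (intro tendsto_intros fz)
  then have g: "((\<lambda>t. L * (\<Sum>z\<in>UNIV. \<bar>f t z - f t0 z\<bar>)) \<longlongrightarrow> 0) (at t0)" by simp
  have "((\<lambda>t. Q (f t) x y - Q (f t0) x y) \<longlongrightarrow> 0) (at t0)"
    by (rule Lim_null_comparison[OF _ g]) (use L pm in \<open>auto intro!: always_eventually\<close>)
  then have "((\<lambda>t. Q (f t) x y) \<longlongrightarrow> Q (f t0) x y) (at t0)" by (rule LIM_zero_cancel)
  then show "((\<lambda>t. Q (f t) x y) \<longlongrightarrow> Q (f t0) x y) (at t0 within UNIV)" by simp
qed

lemma Q_bound:
  fixes Q :: "('x::finite \<Rightarrow> real) \<Rightarrow> 'x \<Rightarrow> 'x \<Rightarrow> real"
  assumes L: "\<forall>\<mu> \<mu>' x y. prob_meas \<mu> \<longrightarrow> prob_meas \<mu>' \<longrightarrow>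
        \<bar>Q \<mu> x y - Q \<mu>' x y\<bar> \<le> L * (\<Sum>z\<in>UNIV. \<bar>\<mu> z - \<mu>' z\<bar>)"
    and pm0: "prob_meas \<mu>0" and pm: "prob_meas \<mu>"
  shows "\<bar>Q \<mu> x y\<bar> \<le> (\<Sum>x\<in>UNIV. \<Sum>y\<in>UNIV. \<bar>Q \<mu>0 x y\<bar>) + 2 * \<bar>L\<bar>"
proof -
  define S where "S = (\<Sum>z\<in>UNIV. \<bar>\<mu> z - \<mu>0 z\<bar>)"
  have S0: "0 \<le> S" unfolding S_def by (simp add: sum_nonneg)
  have "S \<le> (\<Sum>z\<in>UNIV. \<mu> z + \<mu>0 z)" unfolding S_def
    using prob_le1[OF pm] prob_le1[OF pm0] by (intro sum_mono) (simp add: abs_le_iff)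
  also have "\<dots> = 2" using pm pm0 by (simp add: prob_meas_def sum.distrib)
  finally have S2: "S \<le> 2" .
  have "\<bar>Q \<mu> x y - Q \<mu>0 x y\<bar> \<le> L * S" using L pm pm0 by (simp add: S_def)
  also have "\<dots> \<le> \<bar>L\<bar> * S" using S0 by (simp add: mult_right_mono)
  also have "\<dots> \<le> \<bar>L\<bar> * 2" using S2 by (simp add: mult_left_mono)
  finally have a: "\<bar>Q \<mu> x y - Q \<mu>0 x y\<bar> \<le> 2 * \<bar>L\<bar>" by simp
  have "\<bar>Q \<mu>0 x y\<bar> \<le> (\<Sum>y\<in>UNIV. \<bar>Q \<mu>0 x y\<bar>)" by (rule member_le_sum) auto
  also have "\<dots> \<le> (\<Sum>x\<in>UNIV. \<Sum>y\<in>UNIV. \<bar>Q \<mu>0 x y\<bar>)"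
    by (rule member_le_sum[where f="\<lambda>x. \<Sum>y\<in>UNIV. \<bar>Q \<mu>0 x y\<bar>"]) (auto intro: sum_nonneg)
  finally show ?thesis using a by linarith
qed



theorem proposition2p7:
  fixes Q :: "('x::finite \<Rightarrow> real) \<Rightarrow> 'x \<Rightarrow> 'x \<Rightarrow> real"
    and \<pi> :: "('x \<Rightarrow> real) \<Rightarrow> 'x \<Rightarrow> real"
    and T :: real and \<mu> \<nu> :: "'x \<Rightarrow> real"
    and c :: "real \<Rightarrow> 'x \<Rightarrow> real" and v :: "real \<Rightarrow> 'x \<Rightarrow> 'x \<Rightarrow> real"
  assumes "standing_assms Q \<pi>"
    and "T > 0" and "prob_meas \<mu>" and "prob_meas \<nu>"
    and "vecCE T \<mu> \<nu> c v"
    and "(\<integral>\<^sup>+ t\<in>{0..T}. vec_action Q (c t) (v t) \<partial>lborel) < \<infinity>"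
  shows "\<exists>\<psi> :: real \<Rightarrow> 'x \<Rightarrow> real.
           (\<forall>x. (\<lambda>t. \<psi> t x) \<in> borel_measurable lborel) \<and>
           CE Q T \<mu> \<nu> c \<psi> \<and>
           (\<integral>\<^sup>+ t\<in>{0..T}. ennreal (action Q (c t) (\<psi> t)) \<partial>lborel)
             \<le> (\<integral>\<^sup>+ t\<in>{0..T}. vec_action Q (c t) (v t) \<partial>lborel)"
proof -
  note T = \<open>T > 0\<close>
  from assms(1) obtain L where
    QL: "\<forall>\<mu> \<mu>' x y. prob_meas \<mu> \<longrightarrow> prob_meas \<mu>' \<longrightarrow>
        \<bar>Q \<mu> x y - Q \<mu>' x y\<bar> \<le> L * (\<Sum>z\<in>UNIV. \<bar>\<mu> z - \<mu>' z\<bar>)"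
    unfolding standing_assms_def by blast
  have Qnn: "prob_meas m \<Longrightarrow> x \<noteq> y \<Longrightarrow> 0 \<le> Q m x y" for m x y
    using assms(1) unfolding standing_assms_def by blast
  from assms(5) have cc: "\<And>x. continuous_on {0..T} (\<lambda>t. c t x)"
    and pm: "\<And>t. t \<in> {0..T} \<Longrightarrow> prob_meas (c t)"
    and vi: "\<And>x y. set_integrable lborel {0..T} (\<lambda>t. v t x y)"
    and ce: "\<And>\<phi> \<phi>' x. C1c T \<phi> \<phi>' \<Longrightarrow> (LINT t:{0..T}|lborel. \<phi>' t * c t x - \<phi> t * dvg (v t) x) = 0"
    unfolding vecCE_def by auto
  define cl where "cl t = max 0 (min T t)" for t
  define ct where "ct t = c (cl t)" for t
  have cl_in: "cl t \<in> {0..T}" for t using T by (auto simp: cl_def)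
  have ct_eq: "t \<in> {0..T} \<Longrightarrow> ct t = c t" for t by (auto simp: ct_def cl_def)
  have pmct: "prob_meas (ct t)" for t unfolding ct_def using pm cl_in by blast
  have ctc: "continuous_on UNIV (\<lambda>t. ct t x)" for x
  proof -
    have "continuous_on UNIV cl" unfolding cl_def by (intro continuous_intros)
    moreover have "range cl \<subseteq> {0..T}" using cl_in by blast
    ultimately show ?thesis unfolding ct_def
      using continuous_on_compose2[OF cc[of x], of UNIV cl] by blast
  qed
  define W where "W t = wgt Q (ct t)" for t
  define vb where "vb t x y = indicator {0..T} t *\<^sub>R v t x y" for t x y
  have vbe: "t \<in> {0..T} \<Longrightarrow> vb t = v t" for t by (auto simp: vb_def fun_eq_iff)
  define B where "B t = dvg (vb t)" for t
  define \<psi> where "\<psi> t = Sol (W t) (B t)" for t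
  have ctm[measurable]: "(\<lambda>t. ct t x) \<in> borel_measurable lborel" for x
    using borel_measurable_continuous_onI[OF ctc] by simp
  have Qm[measurable]: "(\<lambda>t. Q (ct t) x y) \<in> borel_measurable lborel" for x y
    using borel_measurable_continuous_onI[OF Q_cont[OF QL pmct ctc]] by simp
  have Wm'[measurable]: "(\<lambda>t. wgt Q (ct t) x y) \<in> borel_measurable lborel" for x y
    unfolding wgt_def by measurable
  have Wm[measurable]: "(\<lambda>t. W t x y) \<in> borel_measurable lborel" for x y
    unfolding W_def by measurable
  have vbm[measurable]: "(\<lambda>t. vb t x y) \<in> borel_measurable lborel" for x y
    using vi[of x y] unfolding set_integrable_def vb_def by (rule borel_measurable_integrable)
  have Bm[measurable]: "(\<lambda>t. B t x) \<in> borel_measurable lborel" for x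
    unfolding B_def dvg_def by measurable
  have psim[measurable]: "(\<lambda>t. \<psi> t x) \<in> borel_measurable lborel" for x
    unfolding \<psi>_def by measurable
  have Wsym: "symw (W t)" for t
  proof -
    have "W t x y = W t y x" for x y unfolding W_def wgt_def using LM_sym by auto
    moreover have "0 \<le> W t x y" for x y
      unfolding W_def wgt_def using prob_le1[OF pmct] Qnn[OF pmct]
      by (auto intro!: LM_nonneg)
    ultimately show ?thesis unfolding symw_def by blast
  qed
  define Qb where "Qb = (\<Sum>x\<in>UNIV. \<Sum>y\<in>UNIV. \<bar>Q \<mu> x y\<bar>) + 2 * \<bar>L\<bar>"
  have Qb0: "0 \<le> Qb" unfolding Qb_def by (intro add_nonneg_nonneg sum_nonneg) auto
  have Qb: "\<bar>Q (ct t) x y\<bar> \<le> Qb" for t x y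
    unfolding Qb_def by (rule Q_bound[OF QL assms(3) pmct])
  have Wb: "W t x y \<le> 2 * Qb" for t x y
  proof (cases "x = y")
    case True then show ?thesis using Qb[of t x y] by (simp add: W_def wgt_def)
  next
    case False
    have a: "0 \<le> ct t x * Q (ct t) x y" "0 \<le> ct t y * Q (ct t) y x"
      using prob_le1[OF pmct] Qnn[OF pmct] False by auto
    have "ct t x * Q (ct t) x y \<le> 1 * Qb"
      using prob_le1[OF pmct, of t x] Qb[of t x y] a(1) Qnn[OF pmct False]
      by (intro mult_mono) (auto simp: abs_le_iff)
    moreover have "ct t y * Q (ct t) y x \<le> 1 * Qb"
      using prob_le1[OF pmct, of t y] Qb[of t y x] a(2) Qnn[OF pmct, of y x] False
      by (intro mult_mono) (auto simp: abs_le_iff)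
    ultimately show ?thesis using LM_le[OF a] False by (simp add: W_def wgt_def)
  qed
  have good: "(\<forall>x. dvg (\<lambda>x y. W t x y * grad (\<psi> t) x y) x = B t x) \<and>
              ennreal (action Q (c t) (\<psi> t)) \<le> vec_action Q (c t) (v t)"
    if t: "t \<in> {0..T}" and fin: "vec_action Q (c t) (v t) < \<infinity>" for t
  proof -
    define w where "w = W t"
    have wc: "wgt Q (c t) = w" using ct_eq[OF t] by (simp add: w_def W_def)
    have ws: "symw w" using Wsym by (simp add: w_def)
    have fin': "ennreal (1/2) * (\<Sum>x\<in>UNIV. \<Sum>y\<in>UNIV. alpha (v t x y) (w x y)) < \<infinity>"
      using fin by (simp add: vec_action_def wc)
    note vf = va_fin[of w "v t", OF symw_nn[OF ws] fin']
    have hv: "\<And>x y. w x y = 0 \<Longrightarrow> v t x y = 0" using vf(1) by blast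
    have Bt: "B t = dvg (v t)" using t by (simp add: B_def vbe)
    have hb: "\<And>x. (\<Sum>y\<in>{y. (x,y) \<in> (edges w)\<^sup>*}. B t y) = 0"
      unfolding Bt by (rule comp_sum[OF ws hv])
    have lap: "Lap w (\<psi> t) x = - dvg (v t) x" for x
      using Sol_Lap[OF ws hb] by (simp add: \<psi>_def w_def[symmetric] Bt)
    have "action Q (c t) (\<psi> t) \<le> (1/2) * (\<Sum>x\<in>UNIV. \<Sum>y\<in>UNIV. (if w x y > 0 then (v t x y)\<^sup>2 / w x y else 0))"
      unfolding action_def wc by (rule action_le[OF ws hv lap])
    then have "ennreal (action Q (c t) (\<psi> t)) \<le> vec_action Q (c t) (v t)"
      unfolding vec_action_def wc vf(2) by (rule ennreal_leI)
    moreover have "dvg (\<lambda>x y. W t x y * grad (\<psi> t) x y) x = B t x" for x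
      using dvg_flux[OF ws, of "\<psi> t" x] lap[of x] by (simp add: w_def Bt)
    ultimately show ?thesis by blast
  qed
  have ineq: "(\<integral>\<^sup>+ t\<in>{0..T}. ennreal (action Q (c t) (\<psi> t)) \<partial>lborel)
             \<le> (\<integral>\<^sup>+ t\<in>{0..T}. vec_action Q (c t) (v t) \<partial>lborel)"
  proof (rule nn_integral_mono)
    fix t
    show "ennreal (action Q (c t) (\<psi> t)) * indicator {0..T} t \<le> vec_action Q (c t) (v t) * indicator {0..T} t"
    proof (cases "t \<in> {0..T}")
      case True
      show ?thesis
      proof (cases "vec_action Q (c t) (v t) < \<infinity>")
        case True
        then have "ennreal (action Q (c t) (\<psi> t)) \<le> vec_action Q (c t) (v t)"
          using good[OF \<open>t \<in> {0..T}\<close>] by blast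
        then show ?thesis using \<open>t \<in> {0..T}\<close> by simp
      next
        case False
        then have "vec_action Q (c t) (v t) = \<infinity>" by (simp add: less_top[symmetric])
        then show ?thesis using \<open>t \<in> {0..T}\<close> by simp
      qed
    qed simp
  qed
  define VA where "VA t = vec_action Q (ct t) (vb t)" for t
  have VAm[measurable]: "VA \<in> borel_measurable lborel"
    unfolding VA_def vec_action_def by measurable
  have "(\<integral>\<^sup>+ t. VA t * indicator {0..T} t \<partial>lborel) = (\<integral>\<^sup>+ t\<in>{0..T}. vec_action Q (c t) (v t) \<partial>lborel)"
    by (intro nn_integral_cong) (auto simp: VA_def ct_eq vbe indicator_def)
  then have "(\<integral>\<^sup>+ t. VA t * indicator {0..T} t \<partial>lborel) \<noteq> \<infinity>" using assms(6) by simp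
  then have "AE t in lborel. VA t * indicator {0..T} t \<noteq> \<infinity>"
    by (intro nn_integral_PInf_AE) measurable
  then have AEg: "AE t in lborel. t \<in> {0..T} \<longrightarrow> vec_action Q (c t) (v t) < \<infinity>"
  proof (rule eventually_mono)
    fix t assume h: "VA t * indicator {0..T} t \<noteq> \<infinity>"
    show "t \<in> {0..T} \<longrightarrow> vec_action Q (c t) (v t) < \<infinity>"
    proof
      assume t: "t \<in> {0..T}"
      have "VA t = vec_action Q (c t) (v t)"
        using t by (simp add: VA_def ct_eq vbe)
      then show "vec_action Q (c t) (v t) < \<infinity>" using h t by (simp add: top.not_eq_extremum)
    qed
  qed
  have flux_int: "set_integrable lborel {0..T} (\<lambda>t. wgt Q (c t) x y * grad (\<psi> t) x y)" for x y
  proof -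
    define F where "F t = W t x y * grad (\<psi> t) x y" for t
    define A where "A t = ennreal (action Q (ct t) (\<psi> t))" for t
    have Fm[measurable]: "F \<in> borel_measurable lborel" unfolding F_def grad_def by measurable
    have Am[measurable]: "A \<in> borel_measurable lborel" unfolding A_def action_def by measurable
    have eq: "(\<lambda>t. indicator {0..T} t *\<^sub>R (wgt Q (c t) x y * grad (\<psi> t) x y)) = (\<lambda>t. indicator {0..T} t *\<^sub>R F t)"
      by (auto simp: F_def W_def ct_eq indicator_def)
    have pt: "ennreal (norm (indicator {0..T} t *\<^sub>R F t)) \<le> (ennreal (2 * Qb) + 2 * A t) * indicator {0..T} t" for t
    proof (cases "t \<in> {0..T}")
      case True
      define g where "g = grad (\<psi> t) x y"
      define a where "a = action Q (ct t) (\<psi> t)"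
      have w0: "0 \<le> W t x y" using symw_nn[OF Wsym] .
      have "W t x y * g\<^sup>2 \<le> (\<Sum>y'\<in>UNIV. (\<psi> t y' - \<psi> t x)\<^sup>2 * W t x y')"
        using member_le_sum[of y UNIV "\<lambda>y'. (\<psi> t y' - \<psi> t x)\<^sup>2 * W t x y'"] symw_nn[OF Wsym]
        by (simp add: g_def grad_def mult.commute)
      also have "\<dots> \<le> (\<Sum>x'\<in>UNIV. \<Sum>y'\<in>UNIV. (\<psi> t y' - \<psi> t x')\<^sup>2 * W t x' y')"
        using member_le_sum[of x UNIV "\<lambda>x'. \<Sum>y'\<in>UNIV. (\<psi> t y' - \<psi> t x')\<^sup>2 * W t x' y'"] symw_nn[OF Wsym]
        by (simp add: sum_nonneg)
      finally have wg: "W t x y * g\<^sup>2 \<le> 2 * a" by (simp add: a_def action_def W_def)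
      have a0: "0 \<le> a" unfolding a_def action_def using symw_nn[OF Wsym]
        by (auto intro!: sum_nonneg simp: W_def)
      have "0 \<le> (\<bar>g\<bar> - 1)\<^sup>2" by simp
      moreover have "(\<bar>g\<bar> - 1)\<^sup>2 = g\<^sup>2 - 2 * \<bar>g\<bar> + 1" by (simp add: power2_diff)
      ultimately have "\<bar>g\<bar> \<le> 1 + g\<^sup>2" by linarith
      then have "W t x y * \<bar>g\<bar> \<le> W t x y * (1 + g\<^sup>2)" using w0 by (rule mult_left_mono)
      also have "\<dots> \<le> 2 * Qb + 2 * a" using Wb[of t x y] wg by (simp add: algebra_simps)
      finally have "norm (indicator {0..T} t *\<^sub>R F t) \<le> 2 * Qb + 2 * a"
        using True w0 by (simp add: F_def g_def abs_mult)
      then have "ennreal (norm (indicator {0..T} t *\<^sub>R F t)) \<le> ennreal (2 * Qb + 2 * a)"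
        by (rule ennreal_leI)
      also have "\<dots> \<le> ennreal (2 * Qb) + ennreal (2 * a)"
        using a0 Qb0 by (simp add: ennreal_plus)
      finally show ?thesis using True a0 by (simp add: A_def a_def ennreal_mult')
    qed simp
    have "(\<integral>\<^sup>+ t. ennreal (norm (indicator {0..T} t *\<^sub>R F t)) \<partial>lborel)
        \<le> (\<integral>\<^sup>+ t. (ennreal (2 * Qb) + 2 * A t) * indicator {0..T} t \<partial>lborel)"
      by (intro nn_integral_mono pt)
    also have "\<dots> = (\<integral>\<^sup>+ t. ennreal (2 * Qb) * indicator {0..T} t \<partial>lborel) + (\<integral>\<^sup>+ t. 2 * (A t * indicator {0..T} t) \<partial>lborel)"
      by (simp add: distrib_right nn_integral_add mult.assoc)
    also have "(\<integral>\<^sup>+ t. 2 * (A t * indicator {0..T} t) \<partial>lborel) = 2 * (\<integral>\<^sup>+ t. A t * indicator {0..T} t \<partial>lborel)"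
      by (rule nn_integral_cmult) measurable
    also have "(\<integral>\<^sup>+ t. ennreal (2 * Qb) * indicator {0..T} t \<partial>lborel) = ennreal (2 * Qb) * ennreal T"
      using T by (simp add: nn_integral_cmult_indicator)
    also have "(\<integral>\<^sup>+ t. A t * indicator {0..T} t \<partial>lborel) = (\<integral>\<^sup>+ t\<in>{0..T}. ennreal (action Q (c t) (\<psi> t)) \<partial>lborel)"
      by (intro nn_integral_cong) (auto simp: A_def ct_eq indicator_def)
    also have "ennreal (2 * Qb) * ennreal T + 2 * \<dots> < \<infinity>"
      using ineq assms(6) by (simp add: ennreal_mult_less_top order.strict_trans1)
    finally have fin: "(\<integral>\<^sup>+ t. ennreal (norm (indicator {0..T} t *\<^sub>R F t)) \<partial>lborel) < \<infinity>" .
    have "integrable lborel (\<lambda>t. indicator {0..T} t *\<^sub>R F t)"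
      by (rule integrableI_bounded) (measurable, use fin in simp)
    then show ?thesis unfolding set_integrable_def eq .
  qed
  have ceq: "(LINT t:{0..T}|lborel. \<phi>' t * c t x - \<phi> t * dvg (\<lambda>x y. wgt Q (c t) x y * grad (\<psi> t) x y) x) = 0"
    if C: "C1c T \<phi> \<phi>'" for \<phi> \<phi>' x
  proof -
    have "continuous_on UNIV \<phi>'" using C by (simp add: C1c_def)
    then have [measurable]: "\<phi>' \<in> borel_measurable lborel"
      using borel_measurable_continuous_onI by simp
    have "\<forall>t. isCont \<phi> t" using C by (auto simp: C1c_def intro: DERIV_isCont)
    then have "continuous_on UNIV \<phi>" by (simp add: continuous_at_imp_continuous_on)
    then have [measurable]: "\<phi> \<in> borel_measurable lborel"
      using borel_measurable_continuous_onI by simp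
    have "(LINT t:{0..T}|lborel. \<phi>' t * c t x - \<phi> t * dvg (\<lambda>x y. wgt Q (c t) x y * grad (\<psi> t) x y) x)
        = (LINT t:{0..T}|lborel. \<phi>' t * ct t x - \<phi> t * dvg (\<lambda>x y. W t x y * grad (\<psi> t) x y) x)"
      by (rule set_lebesgue_integral_cong) (auto simp: W_def ct_eq)
    also have "\<dots> = (LINT t:{0..T}|lborel. \<phi>' t * ct t x - \<phi> t * B t x)"
    proof (rule set_lebesgue_integral_cong_AE)
      show "(\<lambda>t. \<phi>' t * ct t x - \<phi> t * dvg (\<lambda>x y. W t x y * grad (\<psi> t) x y) x) \<in> borel_measurable lborel"
        unfolding dvg_def grad_def by measurable
      show "AE t\<in>{0..T} in lborel. \<phi>' t * ct t x - \<phi> t * dvg (\<lambda>x y. W t x y * grad (\<psi> t) x y) x = \<phi>' t * ct t x - \<phi> t * B t x"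
        using AEg by eventually_elim (use good in auto)
    qed measurable
    also have "\<dots> = (LINT t:{0..T}|lborel. \<phi>' t * c t x - \<phi> t * dvg (v t) x)"
      by (rule set_lebesgue_integral_cong) (auto simp: ct_eq B_def vbe)
    also have "\<dots> = 0" by (rule ce[OF C])
    finally show ?thesis .
  qed
  have "CE Q T \<mu> \<nu> c \<psi>"
    unfolding CE_def vecCE_def using assms(5) flux_int ceq unfolding vecCE_def by auto
  then show ?thesis using psim ineq by blast
qed


end
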